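(* Let $p(x)=\sum_k a_{2k}x^{2k}\in\mathbb{Q}[x]$ have only even powers of $x$. Let $R=\mathbb{Q}[x_a,x_b,x_c,x_d]/(x_a+x_b-x_c-x_d)$, $w=p(x_c)+p(x_d)-p(x_a)-p(x_b)$, and let $\bar\cdot:R\to R$ be the ring homomorphism with $\bar x_a=-x_b$, $\bar x_b=-x_a$, $\bar x_c=-x_d$, $\bar x_d=-x_c$; applying it to the entries of maps induces an endofunctor $\bar\cdot$ of $\mathrm{hmf}_2$ which is the identity on objects and an involution on morphisms. Let $\mathcal F$ be the grading shift functor $\{2\}$ and $\mathcal G$ the identity functor on $\mathrm{hmf}_2$, and let $f:\mathcal F\to\mathcal G$ be the natural transformation given on each object by multiplication by $x_a+x_b$. Then there is an operation $\partial:\mathrm{Hom}_{\mathrm{hmf}_2}(A,B)\to\mathrm{Hom}_{\mathrm{hmf}_2}(\mathcal G A,\mathcal F B)$ such that $\mathcal C=\mathrm{hmf}_2$, $\mathcal F,\mathcal G,\bar\cdot,f,\partial$ satisfy: (1) $\partial$ is $\mathbb{Z}$-linear; (2) $\mathcal G(\phi-\bar\phi)=f_B\,\partial\phi$ and $\mathcal F(\phi-\bar\phi)=\partial\phi\,f_A$ for all $\phi\in\mathrm{Hom}(A,B)$; (3) $\partial(\psi\phi)=\partial\psi\,\mathcal G\phi+\mathcal F\bar\psi\,\partial\phi=\partial\psi\,\mathcal G\bar\phi+\mathcal F\psi\,\partial\phi$ for composable $\phi,\psi$.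
   Context: Matrix factorizations over a graded commutative $\mathbb{Q}$-algebra $R$ with homogeneous potential $w$: free graded $C=C^0\oplus C^1$ with $d^0:C^0\to C^1$, $d^1:C^1\to C^0$ of $q$-degree $\deg(w)/2$, $d^1d^0=w=d^0d^1$; $\mathrm{hmf}_w(R)$ is the homotopy category (degree-0 morphisms modulo homotopy); $\{k\}$ is a $q$-shift (if $p$ is not homogeneous, $q$-gradings are ignored). For $uv=w$, $K(u;v)$ has $C^0=R$, $C^1=R\{(\deg v-\deg u)/2\}$, $d^0=u$, $d^1=v$. With $n+1=\deg p$, $v_1=x_c-x_a$, $v_2=(x_c-x_a)(x_c-x_b)$, set $C_p(D_r)=K(w/v_1;v_1)\{n-1\}$ and $C_p(D_s)=K(w/v_2;v_2)\{-1\}$ (the complexes of an oriented smoothing and a singular crossing). $\mathrm{hmf}_2$ is the full subcategory of $\mathrm{hmf}_w(R)$ whose objects are finite direct sums of shifts (in $q$-grading and $\mathbb{Z}/2$-grading) of $C_p(D_r)$ and $C_p(D_s)$. *)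

theory Defs
  imports "HOL-Computational_Algebra.Polynomial" "Jordan_Normal_Form.Matrix"
begin

text \<open>R is modelled via the canonical isomorphism R = Q[x_a,x_b,x_c] (x_d := x_a+x_b-x_c),
  realised as nested univariate polynomials: innermost variable x_a, then x_b, outermost x_c.\<close>

type_synonym R = "rat poly poly poly"

definition emb :: "rat \<Rightarrow> R" where "emb c = [:[:[:c:]:]:]"

definition xa :: R where "xa = [:[:[:0, 1:]:]:]"
definition xb :: R where "xb = [:[:0, 1:]:]"
definition xc :: R where "xc = [:0, 1:]"
definition xd :: R where "xd = xa + xb - xc"

definition peval :: "rat poly \<Rightarrow> R \<Rightarrow> R" where
  "peval p r = poly (map_poly emb p) r"

text \<open>substitution x_a := a, x_b := b, x_c := c (an R-algebra endomorphism of Q[x_a,x_b,x_c])\<close>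
definition ev3 :: "R \<Rightarrow> R \<Rightarrow> R \<Rightarrow> R \<Rightarrow> R" where
  "ev3 r a b c = poly (map_poly (\<lambda>q. poly (map_poly (\<lambda>s. poly (map_poly emb s) a) q) b) r) c"

text \<open>the involution bar: x_a -> -x_b, x_b -> -x_a, x_c -> -x_d (hence x_d -> -x_c)\<close>
definition rbar :: "R \<Rightarrow> R" where "rbar r = ev3 r (- xb) (- xa) (- xd)"

definition wpot :: "rat poly \<Rightarrow> R" where
  "wpot p = peval p xc + peval p xd - peval p xa - peval p xb"

definition v1 :: R where "v1 = xc - xa"
definition v2 :: R where "v2 = (xc - xa) * (xc - xb)"

text \<open>q-grading: deg x_a = deg x_b = deg x_c = deg x_d = 2. An element is homogeneous of
  q-degree d if all its monomials have q-degree d (0 is homogeneous of every degree).\<close>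
definition ishom :: "R \<Rightarrow> int \<Rightarrow> bool" where
  "ishom r d = (\<forall>i j k. coeff (coeff (coeff r i) j) k \<noteq> 0 \<longrightarrow> int (2 * (i + j + k)) = d)"

text \<open>p is homogeneous (deg x = 2) iff it has at most one nonzero coefficient\<close>
definition p_homogeneous :: "rat poly \<Rightarrow> bool" where
  "p_homogeneous p = (\<exists>m. \<forall>k. coeff p k \<noteq> 0 \<longrightarrow> k = m)"

text \<open>A free graded matrix factorization: C^0 = sum of R{g} for g in gens0, C^1 likewise
  (the generator of R{k} sits in q-degree k), d^0 : C^0 -> C^1, d^1 : C^1 -> C^0 as matrices.\<close>
record mf =
  gens0 :: "int list"
  gens1 :: "int list"
  dif0 :: "R mat"
  dif1 :: "R mat"

definition Kmf :: "R \<Rightarrow> R \<Rightarrow> int \<Rightarrow> int \<Rightarrow> mf" where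
  "Kmf u v k0 k1 = \<lparr>gens0 = [k0], gens1 = [k1], dif0 = mat 1 1 (\<lambda>_. u), dif1 = mat 1 1 (\<lambda>_. v)\<rparr>"

definition nn :: "rat poly \<Rightarrow> int" where "nn p = int (degree p) - 1"

text \<open>C_p(D_r) = K(w/v1; v1){n-1}: C^0 = R{n-1}, C^1 = R{(deg v1 - deg(w/v1))/2 + n - 1} = R{0}\<close>
definition CDr :: "rat poly \<Rightarrow> mf" where
  "CDr p = Kmf (wpot p div v1) v1 (nn p - 1) 0"

text \<open>C_p(D_s) = K(w/v2; v2){-1}: C^0 = R{-1}, C^1 = R{(deg v2 - deg(w/v2))/2 - 1} = R{2-n}\<close>
definition CDs :: "rat poly \<Rightarrow> mf" where
  "CDs p = Kmf (wpot p div v2) v2 (-1) (2 - nn p)"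

definition qshift :: "int \<Rightarrow> mf \<Rightarrow> mf" where
  "qshift k C = C\<lparr>gens0 := map (\<lambda>d. d + k) (gens0 C), gens1 := map (\<lambda>d. d + k) (gens1 C)\<rparr>"

definition zshift :: "mf \<Rightarrow> mf" where
  "zshift C = \<lparr>gens0 = gens1 C, gens1 = gens0 C, dif0 = - dif1 C, dif1 = - dif0 C\<rparr>"

definition dsum :: "mf \<Rightarrow> mf \<Rightarrow> mf" where
  "dsum C D = \<lparr>gens0 = gens0 C @ gens0 D, gens1 = gens1 C @ gens1 D,
     dif0 = four_block_mat (dif0 C) (0\<^sub>m (length (gens1 C)) (length (gens0 D)))
                           (0\<^sub>m (length (gens1 D)) (length (gens0 C))) (dif0 D),
     dif1 = four_block_mat (dif1 C) (0\<^sub>m (length (gens0 C)) (length (gens1 D)))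
                           (0\<^sub>m (length (gens0 D)) (length (gens1 C))) (dif1 D)\<rparr>"

definition zero_mf :: mf where
  "zero_mf = \<lparr>gens0 = [], gens1 = [], dif0 = 0\<^sub>m 0 0, dif1 = 0\<^sub>m 0 0\<rparr>"

text \<open>a summand: (singular?, Z/2-shifted?, q-shift)\<close>
datatype smd = Smd bool bool int

fun summand :: "rat poly \<Rightarrow> smd \<Rightarrow> mf" where
  "summand p (Smd s z k) = (if z then zshift else id) (qshift k (if s then CDs p else CDr p))"

fun mfobj :: "rat poly \<Rightarrow> smd list \<Rightarrow> mf" where
  "mfobj p [] = zero_mf"
| "mfobj p (x # xs) = dsum (summand p x) (mfobj p xs)"

definition in_hmf2 :: "rat poly \<Rightarrow> mf \<Rightarrow> bool" where
  "in_hmf2 p C = (\<exists>xs. C = mfobj p xs)"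

type_synonym mor = "R mat \<times> R mat"

text \<open>degree-0 morphisms of matrix factorizations (grading ignored when p is not homogeneous)\<close>
definition ismor :: "rat poly \<Rightarrow> mf \<Rightarrow> mf \<Rightarrow> mor \<Rightarrow> bool" where
  "ismor p C D \<phi> =
    (fst \<phi> \<in> carrier_mat (length (gens0 D)) (length (gens0 C)) \<and>
     snd \<phi> \<in> carrier_mat (length (gens1 D)) (length (gens1 C)) \<and>
     dif0 D * fst \<phi> = snd \<phi> * dif0 C \<and>
     dif1 D * snd \<phi> = fst \<phi> * dif1 C \<and>
     (p_homogeneous p \<longrightarrow>
       (\<forall>i < length (gens0 D). \<forall>j < length (gens0 C).
          ishom (fst \<phi> $$ (i, j)) (gens0 C ! j - gens0 D ! i)) \<and>
       (\<forall>i < length (gens1 D). \<forall>j < length (gens1 C).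
          ishom (snd \<phi> $$ (i, j)) (gens1 C ! j - gens1 D ! i))))"

definition htpy :: "mf \<Rightarrow> mf \<Rightarrow> mor \<Rightarrow> mor \<Rightarrow> bool" where
  "htpy C D \<phi> \<psi> =
    (\<exists>h0 h1. h0 \<in> carrier_mat (length (gens1 D)) (length (gens0 C)) \<and>
             h1 \<in> carrier_mat (length (gens0 D)) (length (gens1 C)) \<and>
             fst \<phi> - fst \<psi> = dif1 D * h0 + h1 * dif0 C \<and>
             snd \<phi> - snd \<psi> = dif0 D * h1 + h0 * dif1 C)"

definition mcomp :: "mor \<Rightarrow> mor \<Rightarrow> mor" where
  "mcomp \<psi> \<phi> = (fst \<psi> * fst \<phi>, snd \<psi> * snd \<phi>)"

definition madd :: "mor \<Rightarrow> mor \<Rightarrow> mor" where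
  "madd \<phi> \<psi> = (fst \<phi> + fst \<psi>, snd \<phi> + snd \<psi>)"

definition msub :: "mor \<Rightarrow> mor \<Rightarrow> mor" where
  "msub \<phi> \<psi> = (fst \<phi> - fst \<psi>, snd \<phi> - snd \<psi>)"

definition mbar :: "mor \<Rightarrow> mor" where
  "mbar \<phi> = (map_mat rbar (fst \<phi>), map_mat rbar (snd \<phi>))"

definition fnat :: "mf \<Rightarrow> mor" where
  "fnat B = ((xa + xb) \<cdot>\<^sub>m 1\<^sub>m (length (gens0 B)), (xa + xb) \<cdot>\<^sub>m 1\<^sub>m (length (gens1 B)))"

end

theory Submission
  imports Defs "Jordan_Normal_Form.Char_Poly"
begin


lemma const_mult: "[:x:] * [:y:] = [:x * y :: 'a::comm_ring_1:]"
  by (simp)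

lemma R_induct:
  assumes e: "\<And>c. P (emb c)" and a: "P xa" and b: "P xb" and c: "P xc"
    and add: "\<And>x y. P x \<Longrightarrow> P y \<Longrightarrow> P (x+y)"
    and mul: "\<And>x y. P x \<Longrightarrow> P y \<Longrightarrow> P (x*y)"
  shows "P r"
proof -
  have 1: "P [:[:s:]:]" for s :: "rat poly"
  proof (induct s)
    case 0 then show ?case using e[of 0] by (simp add: emb_def)
  next
    case (pCons x s)
    have "[:[:pCons x s:]:] = emb x + xa * [:[:s:]:]"
      by (simp add: emb_def xa_def)
    then show ?case using pCons e a add mul by metis
  qed
  have 2: "P [:q:]" for q :: "rat poly poly"
  proof (induct q)
    case 0 then show ?case using 1[of 0] by simp
  next
    case (pCons x q)
    have "[:pCons x q:] = [:[:x:]:] + xb * [:q:]"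
      by (simp add: xb_def)
    then show ?case using pCons 1 b add mul by metis
  qed
  show ?thesis
  proof (induct r)
    case 0 then show ?case using 2[of 0] by simp
  next
    case (pCons x r)
    have "pCons x r = [:x:] + xc * r"
      by (simp add: xc_def)
    then show ?case using pCons 2 c add mul by metis
  qed
qed



lemma emb_hom: "comm_ring_hom emb"
  by unfold_locales (auto simp: emb_def pCons_one)

lemma eval_hom:
  assumes "comm_ring_hom h" shows "comm_ring_hom (\<lambda>p. poly (map_poly h p) x)"
proof -
  interpret h: comm_ring_hom h by fact
  interpret m: map_poly_comm_ring_hom h by unfold_locales
  show ?thesis by unfold_locales (auto simp: m.hom_add m.hom_mult)
qed

lemma ev3_hom: "comm_ring_hom (\<lambda>r. ev3 r a b c)"
  unfolding ev3_def by (intro eval_hom emb_hom)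

lemma emb0[simp]: "emb 0 = 0" by (simp add: emb_def)

lemma ev3_emb[simp]: "ev3 (emb k) a b c = emb k"
  by (cases "k = 0") (simp_all add: ev3_def emb_def map_poly_pCons)
lemma ev3_xa[simp]: "ev3 xa a b c = a"
  by (simp add: ev3_def emb_def xa_def map_poly_pCons pCons_one)
lemma ev3_xb[simp]: "ev3 xb a b c = b"
  by (simp add: ev3_def emb_def xb_def map_poly_pCons pCons_one)
lemma ev3_xc[simp]: "ev3 xc a b c = c"
  by (simp add: ev3_def emb_def xc_def map_poly_pCons pCons_one)

interpretation rb: comm_ring_hom rbar
  unfolding rbar_def by (rule ev3_hom)

lemma rbar_emb[simp]: "rbar (emb k) = emb k" by (simp add: rbar_def)
lemma rbar_xa[simp]: "rbar xa = - xb" by (simp add: rbar_def)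
lemma rbar_xb[simp]: "rbar xb = - xa" by (simp add: rbar_def)
lemma rbar_xc[simp]: "rbar xc = - xd" by (simp add: rbar_def)
lemma rbar_xd[simp]: "rbar xd = - xc" 
  by (simp add: xd_def rb.hom_add rb.hom_minus)

definition ff :: R where "ff = xa + xb"

lemma ff_dvd: "ff dvd (r - rbar r)"
proof (induct r rule: R_induct)
  case (5 x y)
  have "x + y - rbar (x+y) = (x - rbar x) + (y - rbar y)"
    by (simp add: rb.hom_add algebra_simps)
  then show ?case using 5 by (metis dvd_add)
next
  case (6 x y)
  have "x * y - rbar (x*y) = (x - rbar x) * y + rbar x * (y - rbar y)"
    by (simp add: rb.hom_mult algebra_simps)
  then show ?case using 6 by simp
qed (auto simp: ff_def rb.hom_add xd_def algebra_simps)

lemma ff_nz: "ff \<noteq> 0"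
  by (simp add: ff_def xa_def xb_def)



lemma comp_hom: "comm_ring_hom f \<Longrightarrow> comm_ring_hom g \<Longrightarrow> comm_ring_hom (\<lambda>x. f (g x))"
proof -
  assume a: "comm_ring_hom f" "comm_ring_hom g"
  interpret f: comm_ring_hom f by (rule a)
  interpret g: comm_ring_hom g by (rule a)
  show ?thesis by unfold_locales (simp_all add: f.hom_add g.hom_add f.hom_mult g.hom_mult)
qed

lemma mp_hom: "comm_ring_hom h \<Longrightarrow> comm_ring_hom (map_poly h)"
proof -
  assume a: "comm_ring_hom h"
  interpret h: comm_ring_hom h by (rule a)
  interpret m: map_poly_comm_ring_hom h by unfold_locales
  show ?thesis by (rule m.comm_ring_hom_axioms)
qed

lemma pc_hom: "comm_ring_hom (\<lambda>q. q \<circ>\<^sub>p p)"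
  by unfold_locales (simp_all add: pcompose_add pcompose_mult pcompose_1)

definition sc1 :: "rat \<Rightarrow> rat poly \<Rightarrow> rat poly" where "sc1 t s = s \<circ>\<^sub>p [:0, t:]"
definition sc2 :: "rat \<Rightarrow> rat poly poly \<Rightarrow> rat poly poly" where
  "sc2 t q = map_poly (sc1 t) q \<circ>\<^sub>p [:0, [:t:]:]"
definition sc :: "rat \<Rightarrow> R \<Rightarrow> R" where
  "sc t r = map_poly (sc2 t) r \<circ>\<^sub>p [:0, [:[:t:]:]:]"

lemma sc1_hom: "comm_ring_hom (sc1 t)"
  unfolding sc1_def by (rule pc_hom)
lemma sc2_hom: "comm_ring_hom (sc2 t)"
  unfolding sc2_def by (rule comp_hom[OF pc_hom mp_hom[OF sc1_hom]])
lemma sc_hom: "comm_ring_hom (sc t)"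
  unfolding sc_def by (rule comp_hom[OF pc_hom mp_hom[OF sc2_hom]])

lemma const_pow: "[:c:] ^ n = [:c ^ n :: 'a::comm_ring_1:]"
  by (induct n) (simp_all add: pCons_one)

lemma coeff_const_mult: "coeff ([:c:] * s) k = c * coeff s k"
  by simp

lemma sc1_0[simp]: "sc1 t 0 = 0" by (simp add: sc1_def)
lemma sc2_0[simp]: "sc2 t 0 = 0" by (simp add: sc2_def)

lemma coeff_sc: "coeff (coeff (coeff (sc t r) i) j) k = t ^ (i + j + k) * coeff (coeff (coeff r i) j) k"
  by (simp add: sc_def sc2_def sc1_def coeff_pcompose_linear coeff_map_poly const_pow
      power_add mult_ac)

lemma coeff_emb_mult: "coeff (coeff (coeff (emb c * r) i) j) k = c * coeff (coeff (coeff r i) j) k"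
  by (simp add: emb_def)

lemma sc_xa: "sc t xa = emb t * xa"
  by (simp add: sc_def sc2_def sc1_def xa_def emb_def map_poly_pCons pcompose_pCons)
lemma sc_xb: "sc t xb = emb t * xb"
  by (simp add: sc_def sc2_def sc1_def xb_def emb_def map_poly_pCons pcompose_pCons)
lemma sc_xc: "sc t xc = emb t * xc"
  by (simp add: sc_def sc2_def sc1_def xc_def emb_def map_poly_pCons pcompose_pCons)
lemma sc_emb: "sc t (emb c) = emb c"
  by (cases "c = 0") (simp_all add: sc_def sc2_def sc1_def emb_def map_poly_pCons)



lemma crh: assumes "comm_ring_hom h"
  shows "h (x + y) = h x + h y" "h (x * y) = h x * h y" "h (- x) = - h x"
    "h (x - y) = h x - h y" "h 0 = 0" "h 1 = 1"
proof -
  interpret comm_ring_hom h by (rule assms)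
  show "h (x + y) = h x + h y" "h (x * y) = h x * h y" "h (- x) = - h x"
    "h (x - y) = h x - h y" "h 0 = 0" "h 1 = 1" by (simp_all add: hom_distribs)
qed

lemmas sc_simps[simp] = crh[OF sc_hom]
lemmas emb_mult = crh(2)[OF emb_hom]

lemma R_eqI: "(\<And>i j k. coeff (coeff (coeff r i) j) k = coeff (coeff (coeff s i) j) k) \<Longrightarrow> r = s"
  by (simp add: poly_eq_iff)

lemma H1: assumes "ishom r (2 * int m)" shows "sc t r = emb (t ^ m) * r"
proof (intro R_eqI)
  fix i j k
  show "coeff (coeff (coeff (sc t r) i) j) k = coeff (coeff (coeff (emb (t ^ m) * r) i) j) k"
  proof (cases "coeff (coeff (coeff r i) j) k = 0")
    case True then show ?thesis by (simp add: coeff_sc coeff_emb_mult)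
  next
    case False
    then have "int (2 * (i + j + k)) = 2 * int m" using assms unfolding ishom_def by blast
    then have "i + j + k = m" by presburger
    then show ?thesis by (simp add: coeff_sc coeff_emb_mult)
  qed
qed

lemma H2: assumes "sc 2 r = emb (2 ^ m) * r" shows "ishom r (2 * int m)"
  unfolding ishom_def
proof (intro allI impI)
  fix i j k assume nz: "coeff (coeff (coeff r i) j) k \<noteq> 0"
  have "coeff (coeff (coeff (sc 2 r) i) j) k = coeff (coeff (coeff (emb (2 ^ m) * r) i) j) k"
    using assms by simp
  then have "(2::rat) ^ (i + j + k) = 2 ^ m" using nz by (simp add: coeff_sc coeff_emb_mult)
  then have "i + j + k = m" by (simp add: power_inject_exp)
  then show "int (2 * (i + j + k)) = 2 * int m" by simp
qed

lemma H0: assumes "ishom r d" "r \<noteq> 0" shows "\<exists>m. d = 2 * int m"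
proof -
  define i where "i = degree r"
  have i: "coeff r i \<noteq> 0" using assms(2) unfolding i_def by simp
  define j where "j = degree (coeff r i)"
  have j: "coeff (coeff r i) j \<noteq> 0" using i unfolding j_def by simp
  define k where "k = degree (coeff (coeff r i) j)"
  have k: "coeff (coeff (coeff r i) j) k \<noteq> 0" using j unfolding k_def by simp
  have "int (2 * (i + j + k)) = d" using assms(1) k unfolding ishom_def by blast
  then show ?thesis by (intro exI[of _ "i+j+k"]) simp
qed

lemma ishom_0[simp]: "ishom 0 d" by (simp add: ishom_def)

lemma ishom_diff: "ishom r d \<Longrightarrow> ishom s d \<Longrightarrow> ishom (r - s) d"
  unfolding ishom_def by (metis (no_types, lifting) coeff_diff diff_zero diff_self)

lemma sc_rbar: "sc t (rbar r) = rbar (sc t r)"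
proof (induct r rule: R_induct)
  case (1 c) then show ?case by (simp only: sc_emb rbar_emb)
next
  case 2 then show ?case by (simp only: rbar_xa sc_simps sc_xb sc_xa rb.hom_mult rbar_emb mult_minus_right)
next
  case 3 then show ?case by (simp only: rbar_xb sc_simps sc_xb sc_xa rb.hom_mult rbar_emb mult_minus_right)
next
  case 4 then show ?case
    by (simp only: rbar_xc sc_simps sc_xa sc_xb sc_xc rb.hom_mult rbar_emb xd_def) (simp add: algebra_simps)
next
  case (5 x y) then show ?case by (simp only: sc_simps rb.hom_add)
next
  case (6 x y) then show ?case by (simp only: sc_simps rb.hom_mult)
qed



lemma ishom_rbar: assumes "ishom r d" shows "ishom (rbar r) d"
proof (cases "r = 0")
  case True then show ?thesis by simp
next
  case False
  then obtain m where d: "d = 2 * int m" using H0 assms by blast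
  have "sc 2 (rbar r) = rbar (emb (2 ^ m) * r)"
    using H1[of r m 2] assms d by (simp only: sc_rbar)
  also have "\<dots> = emb (2 ^ m) * rbar r" by (simp only: rb.hom_mult rbar_emb)
  finally show ?thesis using H2 d by simp
qed

lemma sc_ff: "sc t ff = emb t * ff"
  by (simp only: ff_def sc_simps sc_xa sc_xb distrib_left)

lemma emb_nz: "c \<noteq> 0 \<Longrightarrow> emb c \<noteq> 0" by (simp add: emb_def)

lemma ishom_div: assumes "ishom (ff * q) d" shows "ishom q (d - 2)"
proof (cases "q = 0")
  case True then show ?thesis by simp
next
  case False
  then have nz: "ff * q \<noteq> 0" using ff_nz by simp
  then obtain m where d: "d = 2 * int m" using H0 assms by blast
  have e: "sc t (ff * q) = emb (t ^ m) * (ff * q)" for t using H1 assms d by blast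
  show ?thesis
  proof (cases m)
    case 0
    have "sc 0 (ff * q) = 0" by (simp only: sc_simps sc_ff emb0 mult_zero_left)
    moreover have "emb ((0::rat) ^ m) = 1" using 0 by (simp add: crh(6)[OF emb_hom])
    ultimately have "ff * q = 0" using e[of 0] by (metis mult_1_left)
    then show ?thesis using nz by simp
  next
    case (Suc m')
    have a: "sc 2 (ff * q) = emb 2 * ff * sc 2 q" by (simp only: sc_simps sc_ff)
    have b: "sc 2 (ff * q) = emb 2 * ff * (emb (2 ^ m') * q)"
      using e[of 2] Suc by (simp only: power_Suc emb_mult mult_ac)
    have "emb 2 * ff * sc 2 q = emb 2 * ff * (emb (2 ^ m') * q)" using a b by (rule subst)
    moreover have "emb 2 * ff \<noteq> 0" using ff_nz emb_nz[of 2] by simp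
    ultimately have "sc 2 q = emb (2 ^ m') * q" by (metis mult_left_cancel)
    then have "ishom q (2 * int m')" by (rule H2)
    then show ?thesis using d Suc by simp
  qed
qed

definition dpart :: "R \<Rightarrow> R" where "dpart r = (r - rbar r) div ff"

lemma dpart_eq: "ff * dpart r = r - rbar r"
  unfolding dpart_def using ff_dvd by (rule dvd_mult_div_cancel)

lemma ishom_dpart: assumes "ishom r d" shows "ishom (dpart r) (d - 2)"
  using ishom_div[of "dpart r" d] dpart_eq ishom_diff[OF assms ishom_rbar[OF assms]] by simp



lemma dpart_eqI: assumes "ff * z = r - rbar r" shows "dpart r = z"
  using dpart_eq[of r] assms ff_nz by (metis mult_left_cancel)

lemma dpart_add: "dpart (x + y) = dpart x + dpart y"
  by (rule dpart_eqI) (simp add: distrib_left dpart_eq rb.hom_add)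
lemma dpart_diff: "dpart (x - y) = dpart x - dpart y"
  by (rule dpart_eqI) (simp add: right_diff_distrib dpart_eq rb.hom_minus)
lemma dpart_zero: "dpart 0 = 0"
  by (rule dpart_eqI) simp
lemma dpart_mult1: "dpart (x * y) = dpart x * y + rbar x * dpart y"
proof (rule dpart_eqI)
  have "ff * (dpart x * y + rbar x * dpart y) = (ff * dpart x) * y + rbar x * (ff * dpart y)"
    by (simp only: distrib_left mult.assoc mult.left_commute)
  also have "\<dots> = (x - rbar x) * y + rbar x * (y - rbar y)" by (simp only: dpart_eq)
  also have "\<dots> = x * y - rbar (x * y)" by (simp only: rb.hom_mult left_diff_distrib right_diff_distrib)
  finally show "ff * (dpart x * y + rbar x * dpart y) = x * y - rbar (x * y)" .
qed
lemma dpart_mult2: "dpart (x * y) = dpart x * rbar y + x * dpart y"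
proof (rule dpart_eqI)
  have "ff * (dpart x * rbar y + x * dpart y) = (ff * dpart x) * rbar y + x * (ff * dpart y)"
    by (simp only: distrib_left mult.assoc mult.left_commute)
  also have "\<dots> = (x - rbar x) * rbar y + x * (y - rbar y)" by (simp only: dpart_eq)
  also have "\<dots> = x * y - rbar (x * y)" by (simp only: rb.hom_mult left_diff_distrib right_diff_distrib)
  finally show "ff * (dpart x * rbar y + x * dpart y) = x * y - rbar (x * y)" .
qed
lemma dpart_fix: "rbar x = x \<Longrightarrow> dpart x = 0"
  by (rule dpart_eqI) simp
lemma dpart_sum: "dpart (sum g A) = (\<Sum>a\<in>A. dpart (g a))"
  by (induct A rule: infinite_finite_induct) (simp_all add: dpart_zero dpart_add)

definition dmat :: "R mat \<Rightarrow> R mat" where "dmat M = map_mat dpart M"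
definition bmat :: "R mat \<Rightarrow> R mat" where "bmat M = map_mat rbar M"
definition binv :: "R mat \<Rightarrow> bool" where
  "binv M = (\<forall>i < dim_row M. \<forall>j < dim_col M. rbar (M $$ (i, j)) = M $$ (i, j))"

lemma dmat_dim[simp]: "dim_row (dmat M) = dim_row M" "dim_col (dmat M) = dim_col M"
  by (simp_all add: dmat_def)
lemma bmat_dim[simp]: "dim_row (bmat M) = dim_row M" "dim_col (bmat M) = dim_col M"
  by (simp_all add: bmat_def)
lemma dmat_carrier[simp]: "dmat M \<in> carrier_mat n m \<longleftrightarrow> M \<in> carrier_mat n m"
  unfolding carrier_mat_def by (simp only: mem_Collect_eq dmat_dim)
lemma bmat_carrier[simp]: "bmat M \<in> carrier_mat n m \<longleftrightarrow> M \<in> carrier_mat n m"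
  unfolding carrier_mat_def by (simp only: mem_Collect_eq bmat_dim)
lemma dmat_idx[simp]: "i < dim_row M \<Longrightarrow> j < dim_col M \<Longrightarrow> dmat M $$ (i, j) = dpart (M $$ (i, j))"
  by (simp add: dmat_def)
lemma bmat_idx[simp]: "i < dim_row M \<Longrightarrow> j < dim_col M \<Longrightarrow> bmat M $$ (i, j) = rbar (M $$ (i, j))"
  by (simp add: bmat_def)

lemma mult_idx: assumes "dim_col A = dim_row B" "i < dim_row A" "j < dim_col B"
  shows "(A * B) $$ (i, j) = (\<Sum>l<dim_row B. A $$ (i, l) * B $$ (l, j))"
  using assms by (simp add: scalar_prod_def atLeast0LessThan)



lemma dmat_mult1: assumes "dim_col A = dim_row B"
  shows "dmat (A * B) = dmat A * B + bmat A * dmat B"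
proof (rule eq_matI)
  fix i j assume "i < dim_row (dmat A * B + bmat A * dmat B)" "j < dim_col (dmat A * B + bmat A * dmat B)"
  then have i: "i < dim_row A" and j: "j < dim_col B" by simp_all
  have "dmat (A * B) $$ (i, j) = dpart ((A * B) $$ (i, j))" using i j by simp
  also have "\<dots> = dpart (\<Sum>l<dim_row B. A $$ (i, l) * B $$ (l, j))" by (simp only: mult_idx[OF assms i j])
  also have "\<dots> = (\<Sum>l<dim_row B. dmat A $$ (i, l) * B $$ (l, j)) + (\<Sum>l<dim_row (dmat B). bmat A $$ (i, l) * dmat B $$ (l, j))"
    using i j assms by (simp add: dpart_sum dpart_mult1 sum.distrib)
  also have "\<dots> = (dmat A * B) $$ (i, j) + (bmat A * dmat B) $$ (i, j)"
  proof -
    have e1: "(dmat A * B) $$ (i, j) = (\<Sum>l<dim_row B. dmat A $$ (i, l) * B $$ (l, j))"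
      by (rule mult_idx) (simp_all add: i j assms)
    have e2: "(bmat A * dmat B) $$ (i, j) = (\<Sum>l<dim_row (dmat B). bmat A $$ (i, l) * dmat B $$ (l, j))"
      by (rule mult_idx) (simp_all add: i j assms)
    show ?thesis by (simp only: e1 e2)
  qed
  finally show "dmat (A * B) $$ (i, j) = (dmat A * B + bmat A * dmat B) $$ (i, j)" using i j by simp
qed simp_all

lemma dmat_mult2: assumes "dim_col A = dim_row B"
  shows "dmat (A * B) = dmat A * bmat B + A * dmat B"
proof (rule eq_matI)
  fix i j assume "i < dim_row (dmat A * bmat B + A * dmat B)" "j < dim_col (dmat A * bmat B + A * dmat B)"
  then have i: "i < dim_row A" and j: "j < dim_col B" by simp_all
  have "dmat (A * B) $$ (i, j) = dpart ((A * B) $$ (i, j))" using i j by simp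
  also have "\<dots> = dpart (\<Sum>l<dim_row B. A $$ (i, l) * B $$ (l, j))" by (simp only: mult_idx[OF assms i j])
  also have "\<dots> = (\<Sum>l<dim_row (bmat B). dmat A $$ (i, l) * bmat B $$ (l, j)) + (\<Sum>l<dim_row (dmat B). A $$ (i, l) * dmat B $$ (l, j))"
    using i j assms by (simp add: dpart_sum dpart_mult2 sum.distrib)
  also have "\<dots> = (dmat A * bmat B) $$ (i, j) + (A * dmat B) $$ (i, j)"
  proof -
    have e1: "(dmat A * bmat B) $$ (i, j) = (\<Sum>l<dim_row (bmat B). dmat A $$ (i, l) * bmat B $$ (l, j))"
      by (rule mult_idx) (simp_all add: i j assms)
    have e2: "(A * dmat B) $$ (i, j) = (\<Sum>l<dim_row (dmat B). A $$ (i, l) * dmat B $$ (l, j))"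
      by (rule mult_idx) (simp_all add: i j assms)
    show ?thesis by (simp only: e1 e2)
  qed
  finally show "dmat (A * B) $$ (i, j) = (dmat A * bmat B + A * dmat B) $$ (i, j)" using i j by simp
qed simp_all

lemma dmat_zero: "binv A \<Longrightarrow> dmat A = 0\<^sub>m (dim_row A) (dim_col A)"
  unfolding binv_def by (intro eq_matI) (simp_all add: dpart_fix)

lemma bmat_fix: "binv A \<Longrightarrow> bmat A = A"
  unfolding binv_def by (intro eq_matI) simp_all

lemma dmat_fixL: assumes "dim_col A = dim_row B" "binv A"
  shows "dmat (A * B) = A * dmat B"
proof -
  have "dmat (A * B) = 0\<^sub>m (dim_row A) (dim_col A) * B + A * dmat B"
    using dmat_mult1[OF assms(1)] dmat_zero[OF assms(2)] bmat_fix[OF assms(2)] by simp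
  also have "\<dots> = A * dmat B" using assms(1)
    by (metis carrier_matI dmat_carrier left_add_zero_mat left_mult_zero_mat mult_carrier_mat)
  finally show ?thesis .
qed

lemma dmat_fixR: assumes "dim_col A = dim_row B" "binv B"
  shows "dmat (A * B) = dmat A * B"
proof -
  have "dmat (A * B) = dmat A * B + A * 0\<^sub>m (dim_row B) (dim_col B)"
    using dmat_mult2[OF assms(1)] dmat_zero[OF assms(2)] bmat_fix[OF assms(2)] by simp
  also have "\<dots> = dmat A * B" using assms(1)
    by (metis carrier_matI dmat_carrier right_add_zero_mat right_mult_zero_mat mult_carrier_mat dmat_dim)
  finally show ?thesis .
qed

lemma dmat_add: assumes "dim_row A = dim_row B" "dim_col A = dim_col B"
  shows "dmat (A + B) = dmat A + dmat B"
  using assms by (intro eq_matI) (simp_all add: dpart_add)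

lemma dmat_diff: assumes "dim_row A = dim_row B" "dim_col A = dim_col B"
  shows "dmat (A - B) = dmat A - dmat B"
  using assms by (intro eq_matI) (simp_all add: dpart_diff)

lemma ff_left: assumes "M \<in> carrier_mat n m"
  shows "(ff \<cdot>\<^sub>m 1\<^sub>m n) * dmat M = M - bmat M"
proof -
  have "(ff \<cdot>\<^sub>m 1\<^sub>m n) * dmat M = ff \<cdot>\<^sub>m (1\<^sub>m n * dmat M)"
    using assms by (intro mult_smult_assoc_mat[of _ n n _ m]) simp_all
  also have "\<dots> = ff \<cdot>\<^sub>m dmat M" using assms by simp
  also have "\<dots> = M - bmat M" using assms by (intro eq_matI) (simp_all add: dpart_eq)
  finally show ?thesis .
qed

lemma ff_right: assumes "M \<in> carrier_mat n m"
  shows "dmat M * (ff \<cdot>\<^sub>m 1\<^sub>m m) = M - bmat M"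
proof -
  have "dmat M * (ff \<cdot>\<^sub>m 1\<^sub>m m) = ff \<cdot>\<^sub>m (dmat M * 1\<^sub>m m)"
    using assms by (intro mult_smult_distrib[of _ n m _ m]) simp_all
  also have "\<dots> = ff \<cdot>\<^sub>m dmat M" using assms by simp
  also have "\<dots> = M - bmat M" using assms by (intro eq_matI) (simp_all add: dpart_eq)
  finally show ?thesis .
qed



lemma rbar_hom: "comm_ring_hom rbar" unfolding rbar_def by (rule ev3_hom)
lemmas rbar_simps[simp] = crh[OF rbar_hom]

definition xa' :: "rat poly poly" where "xa' = [:[:0, 1:]:]"
definition xb' :: "rat poly poly" where "xb' = [:0, 1:]"
definition E :: "rat \<Rightarrow> rat poly poly" where "E k = [:[:k:]:]"

lemma xa_eq: "xa = [:xa':]" by (simp add: xa_def xa'_def)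
lemma xb_eq: "xb = [:xb':]" by (simp add: xb_def xb'_def)
lemma xa'_ne_xb': "xb' - xa' \<noteq> 0" by (simp add: xa'_def xb'_def)

lemma evc_hom: "comm_semiring_hom (\<lambda>q::R. poly q s)"
  by unfold_locales simp_all

lemma poly_peval: "poly (peval p r) s = poly (map_poly E p) (poly r s)"
proof -
  have "poly (peval p r) s = poly (map_poly (\<lambda>q. poly q s) (map_poly emb p)) (poly r s)"
    unfolding peval_def by (rule comm_semiring_hom.poly_map_poly[OF evc_hom, symmetric])
  also have "map_poly (\<lambda>q. poly q s) (map_poly emb p) = map_poly E p"
    by (subst map_poly_map_poly) (auto simp: emb_def E_def o_def intro!: arg_cong[where f="\<lambda>f. map_poly f p"])
  finally show ?thesis .
qed

lemma poly_wpot: "poly (wpot p) s = poly (map_poly E p) s + poly (map_poly E p) (xa' + xb' - s)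
   - poly (map_poly E p) xa' - poly (map_poly E p) xb'"
  by (simp add: wpot_def poly_peval xd_def xa_eq xb_eq xc_def)

lemma v1_eq: "v1 = [:- xa', 1:]" by (simp add: v1_def xa_eq xc_def)
lemma xcb_eq: "xc - xb = [:- xb', 1:]" by (simp add: xb_eq xc_def)

lemma v2_eq: "v2 = v1 * [:- xb', 1:]" by (simp add: v2_def v1_def xcb_eq)

lemma v1_dvd: "v1 dvd wpot p"
  unfolding v1_eq by (subst poly_eq_0_iff_dvd[symmetric]) (simp add: poly_wpot)

lemma v2_dvd: "v2 dvd wpot p"
proof -
  define q1 where "q1 = wpot p div v1"
  have w: "wpot p = v1 * q1" unfolding q1_def using v1_dvd by simp
  have "0 = poly (wpot p) xb'" by (simp add: poly_wpot)
  also have "\<dots> = (xb' - xa') * poly q1 xb'" by (subst w) (simp add: v1_eq algebra_simps)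
  finally have "poly q1 xb' = 0" using xa'_ne_xb' by simp
  then obtain q2 where "q1 = [:- xb', 1:] * q2" using poly_eq_0_iff_dvd by (metis dvdE)
  then have "wpot p = v2 * q2" using w by (simp only: v2_eq mult.assoc)
  then show ?thesis by simp
qed

lemma v1_nz: "v1 \<noteq> 0" by (simp add: v1_eq)
lemma v2_nz: "v2 \<noteq> 0"
proof -
  have "[:- xb', 1:] \<noteq> 0" by simp
  then show ?thesis using v1_nz by (simp only: v2_eq mult_eq_0_iff) blast
qed

lemma rbar_v1: "rbar v1 = v1" by (simp add: v1_def xd_def)
lemma rbar_v2: "rbar v2 = v2" by (simp add: v2_def xd_def rb.hom_mult algebra_simps)

lemma rbar_peval: "rbar (peval p r) = peval p (rbar r)"
proof -
  have "rbar (peval p r) = poly (map_poly rbar (map_poly emb p)) (rbar r)"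
    unfolding peval_def by (rule rb.poly_map_poly[symmetric])
  also have "map_poly rbar (map_poly emb p) = map_poly emb p"
    by (subst map_poly_map_poly) (auto simp: o_def)
  finally show ?thesis by (simp add: peval_def)
qed

lemma peval_neg: assumes even: "\<forall>k. odd k \<longrightarrow> coeff p k = 0"
  shows "peval p (- x) = peval p x"
  unfolding peval_def poly_altdef
proof (rule sum.cong)
  fix i assume "i \<in> {..degree (map_poly emb p)}"
  show "coeff (map_poly emb p) i * (- x) ^ i = coeff (map_poly emb p) i * x ^ i"
    using even by (cases "even i") (simp_all add: coeff_map_poly)
qed simp

lemma rbar_wpot: assumes even: "\<forall>k. odd k \<longrightarrow> coeff p k = 0"
  shows "rbar (wpot p) = wpot p"
  by (simp add: wpot_def rbar_peval peval_neg[OF even])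

lemma rbar_div: assumes "v dvd w" "v \<noteq> 0" "rbar v = v" "rbar w = w"
  shows "rbar (w div v) = w div v"
proof -
  have e: "w = v * (w div v)" using assms(1) by simp
  have "v * rbar (w div v) = rbar w" using assms(3) by (subst e) (simp add: rb.hom_mult)
  also have "\<dots> = v * (w div v)" using assms(4) e by simp
  finally show ?thesis using assms(2) by simp
qed



definition good :: "mf \<Rightarrow> bool" where
  "good C = (dif0 C \<in> carrier_mat (length (gens1 C)) (length (gens0 C)) \<and>
             dif1 C \<in> carrier_mat (length (gens0 C)) (length (gens1 C)) \<and>
             binv (dif0 C) \<and> binv (dif1 C))"

lemma binv_four: assumes "binv A" "binv D" "A \<in> carrier_mat n1 m1" "D \<in> carrier_mat n2 m2"
  shows "binv (four_block_mat A (0\<^sub>m n1 m2) (0\<^sub>m n2 m1) D)"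
  unfolding binv_def
proof (intro allI impI)
  fix i j assume i: "i < dim_row (four_block_mat A (0\<^sub>m n1 m2) (0\<^sub>m n2 m1) D)"
    and j: "j < dim_col (four_block_mat A (0\<^sub>m n1 m2) (0\<^sub>m n2 m1) D)"
  have dA: "dim_row A = n1" "dim_col A = m1" using assms(3) by (simp_all add: carrier_matD)
  have dD: "dim_row D = n2" "dim_col D = m2" using assms(4) by (simp_all add: carrier_matD)
  have i': "i < n1 + n2" and j': "j < m1 + m2" using i j dA dD by simp_all
  have bA: "\<And>i j. i < n1 \<Longrightarrow> j < m1 \<Longrightarrow> rbar (A $$ (i, j)) = A $$ (i, j)"
    using assms(1) dA unfolding binv_def by simp
  have bD: "\<And>i j. i < n2 \<Longrightarrow> j < m2 \<Longrightarrow> rbar (D $$ (i, j)) = D $$ (i, j)"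
    using assms(2) dD unfolding binv_def by simp
  show "rbar (four_block_mat A (0\<^sub>m n1 m2) (0\<^sub>m n2 m1) D $$ (i, j)) = four_block_mat A (0\<^sub>m n1 m2) (0\<^sub>m n2 m1) D $$ (i, j)"
    using i' j' by (simp add: dA dD bA bD)
qed

lemma binv_uminus: "binv A \<Longrightarrow> binv (- A)"
  unfolding binv_def by simp

lemma binv_zero: "binv (0\<^sub>m n m)"
  unfolding binv_def by simp

lemma binv_one: "rbar u = u \<Longrightarrow> binv (mat n m (\<lambda>_. u))"
  unfolding binv_def by simp

lemma good_K: "rbar u = u \<Longrightarrow> rbar v = v \<Longrightarrow> good (Kmf u v k0 k1)"
  unfolding good_def Kmf_def by (simp add: binv_one)

lemma good_q: "good C \<Longrightarrow> good (qshift k C)"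
  unfolding good_def qshift_def by simp

lemma good_z: "good C \<Longrightarrow> good (zshift C)"
  unfolding good_def zshift_def by (simp add: binv_uminus)

lemma good_dsum: "good C \<Longrightarrow> good D \<Longrightarrow> good (dsum C D)"
  unfolding good_def dsum_def by (simp add: binv_four)

lemma good_zero: "good zero_mf"
  unfolding good_def zero_mf_def by (simp add: binv_zero)

lemma good_obj: assumes even: "\<forall>k. odd k \<longrightarrow> coeff p k = 0" and "in_hmf2 p C"
  shows "good C"
proof -
  have r1: "rbar (wpot p div v1) = wpot p div v1"
    by (rule rbar_div[OF v1_dvd v1_nz rbar_v1 rbar_wpot[OF even]])
  have r2: "rbar (wpot p div v2) = wpot p div v2"
    by (rule rbar_div[OF v2_dvd v2_nz rbar_v2 rbar_wpot[OF even]])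
  have gs: "good (summand p x)" for x
  proof (cases x)
    case (Smd s z k)
    have "good (if s then CDs p else CDr p)"
      unfolding CDs_def CDr_def by (simp add: good_K r1 r2 rbar_v1 rbar_v2)
    then show ?thesis using Smd by (simp add: good_q good_z)
  qed
  have "good (mfobj p xs)" for xs
    by (induct xs) (simp_all add: good_zero good_dsum gs)
  then show ?thesis using assms(2) unfolding in_hmf2_def by blast
qed



lemma qshift_simps[simp]: "gens0 (qshift k C) = map (\<lambda>d. d + k) (gens0 C)"
  "gens1 (qshift k C) = map (\<lambda>d. d + k) (gens1 C)"
  "dif0 (qshift k C) = dif0 C" "dif1 (qshift k C) = dif1 C"
  by (simp_all add: qshift_def)

lemma good_dims: assumes "good C"
  shows "dim_row (dif0 C) = length (gens1 C)" "dim_col (dif0 C) = length (gens0 C)"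
    "dim_row (dif1 C) = length (gens0 C)" "dim_col (dif1 C) = length (gens1 C)"
    "binv (dif0 C)" "binv (dif1 C)"
  using assms unfolding good_def by (auto simp: carrier_matD)

lemma htpy_refl: assumes "good C" "good D"
  "fst \<phi> \<in> carrier_mat (length (gens0 D)) (length (gens0 C))"
  "snd \<phi> \<in> carrier_mat (length (gens1 D)) (length (gens1 C))"
  "\<phi> = \<psi>"
  shows "htpy C D \<phi> \<psi>"
  unfolding htpy_def
proof (intro exI conjI)
  let ?h0 = "0\<^sub>m (length (gens1 D)) (length (gens0 C)) :: R mat"
  let ?h1 = "0\<^sub>m (length (gens0 D)) (length (gens1 C)) :: R mat"
  show "?h0 \<in> carrier_mat (length (gens1 D)) (length (gens0 C))" by simp
  show "?h1 \<in> carrier_mat (length (gens0 D)) (length (gens1 C))" by simp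
  have C: "dif0 C \<in> carrier_mat (length (gens1 C)) (length (gens0 C))" using assms(1) good_def by blast
  have D: "dif1 D \<in> carrier_mat (length (gens0 D)) (length (gens1 D))" using assms(2) good_def by blast
  have D': "dif0 D \<in> carrier_mat (length (gens1 D)) (length (gens0 D))" using assms(2) good_def by blast
  have C': "dif1 C \<in> carrier_mat (length (gens0 C)) (length (gens1 C))" using assms(1) good_def by blast
  show "fst \<phi> - fst \<psi> = dif1 D * ?h0 + ?h1 * dif0 C"
    using assms(3,5) C D by (intro eq_matI) (auto simp: carrier_matD)
  show "snd \<phi> - snd \<psi> = dif0 D * ?h1 + ?h0 * dif1 C"
    using assms(4,5) C' D' by (intro eq_matI) (auto simp: carrier_matD)
qed

lemma ismor_dd: assumes gA: "good A" and gB: "good B" and m: "ismor p A B \<phi>"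
  shows "ismor p A (qshift 2 B) (dmat (fst \<phi>), dmat (snd \<phi>))"
proof -
  have c0: "fst \<phi> \<in> carrier_mat (length (gens0 B)) (length (gens0 A))"
   and c1: "snd \<phi> \<in> carrier_mat (length (gens1 B)) (length (gens1 A))"
   and e0: "dif0 B * fst \<phi> = snd \<phi> * dif0 A"
   and e1: "dif1 B * snd \<phi> = fst \<phi> * dif1 A"
   and h: "p_homogeneous p \<longrightarrow>
       (\<forall>i < length (gens0 B). \<forall>j < length (gens0 A).
          ishom (fst \<phi> $$ (i, j)) (gens0 A ! j - gens0 B ! i)) \<and>
       (\<forall>i < length (gens1 B). \<forall>j < length (gens1 A).
          ishom (snd \<phi> $$ (i, j)) (gens1 A ! j - gens1 B ! i))"
    using m unfolding ismor_def by blast+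
  note dA = good_dims[OF gA] and dB = good_dims[OF gB]
  have "dif0 B * dmat (fst \<phi>) = dmat (dif0 B * fst \<phi>)"
    using c0 dB by (simp add: dmat_fixL carrier_matD)
  also have "\<dots> = dmat (snd \<phi> * dif0 A)" using e0 by simp
  also have "\<dots> = dmat (snd \<phi>) * dif0 A" using c1 dA by (simp add: dmat_fixR carrier_matD)
  finally have E0: "dif0 B * dmat (fst \<phi>) = dmat (snd \<phi>) * dif0 A" .
  have "dif1 B * dmat (snd \<phi>) = dmat (dif1 B * snd \<phi>)"
    using c1 dB by (simp add: dmat_fixL carrier_matD)
  also have "\<dots> = dmat (fst \<phi> * dif1 A)" using e1 by simp
  also have "\<dots> = dmat (fst \<phi>) * dif1 A" using c0 dA by (simp add: dmat_fixR carrier_matD)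
  finally have E1: "dif1 B * dmat (snd \<phi>) = dmat (fst \<phi>) * dif1 A" .
  have H: "p_homogeneous p \<longrightarrow>
       (\<forall>i < length (gens0 (qshift 2 B)). \<forall>j < length (gens0 A).
          ishom (dmat (fst \<phi>) $$ (i, j)) (gens0 A ! j - gens0 (qshift 2 B) ! i)) \<and>
       (\<forall>i < length (gens1 (qshift 2 B)). \<forall>j < length (gens1 A).
          ishom (dmat (snd \<phi>) $$ (i, j)) (gens1 A ! j - gens1 (qshift 2 B) ! i))"
  proof (intro impI conjI)
    assume ph: "p_homogeneous p"
    show "\<forall>i < length (gens0 (qshift 2 B)). \<forall>j < length (gens0 A).
          ishom (dmat (fst \<phi>) $$ (i, j)) (gens0 A ! j - gens0 (qshift 2 B) ! i)"
    proof (intro allI impI)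
      fix i j
      assume i: "i < length (gens0 (qshift 2 B))" and j: "j < length (gens0 A)"
      have "ishom (fst \<phi> $$ (i, j)) (gens0 A ! j - gens0 B ! i)" using h ph i j by simp
      then have "ishom (dpart (fst \<phi> $$ (i, j))) (gens0 A ! j - gens0 B ! i - 2)" by (rule ishom_dpart)
      then show "ishom (dmat (fst \<phi>) $$ (i, j)) (gens0 A ! j - gens0 (qshift 2 B) ! i)"
        using i j c0 by (simp add: carrier_matD algebra_simps)
    qed
    show "\<forall>i < length (gens1 (qshift 2 B)). \<forall>j < length (gens1 A).
          ishom (dmat (snd \<phi>) $$ (i, j)) (gens1 A ! j - gens1 (qshift 2 B) ! i)"
    proof (intro allI impI)
      fix i j
      assume i: "i < length (gens1 (qshift 2 B))" and j: "j < length (gens1 A)"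
      have "ishom (snd \<phi> $$ (i, j)) (gens1 A ! j - gens1 B ! i)" using h ph i j by simp
      then have "ishom (dpart (snd \<phi> $$ (i, j))) (gens1 A ! j - gens1 B ! i - 2)" by (rule ishom_dpart)
      then show "ishom (dmat (snd \<phi>) $$ (i, j)) (gens1 A ! j - gens1 (qshift 2 B) ! i)"
        using i j c1 by (simp add: carrier_matD algebra_simps)
    qed
  qed
  show ?thesis unfolding ismor_def using c0 c1 E0 E1 H by simp
qed



lemma good_qs: "good C \<Longrightarrow> good (qshift 2 C)" by (rule good_q)

theorem lemma6p2:
  fixes p :: "rat poly"
  assumes even: "\<forall>k. odd k \<longrightarrow> coeff p k = 0"
  shows "\<exists>dd :: mf \<Rightarrow> mf \<Rightarrow> mor \<Rightarrow> mor.
    (\<forall>A B \<phi>. in_hmf2 p A \<and> in_hmf2 p B \<and> ismor p A B \<phi> \<longrightarrow>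
        ismor p A (qshift 2 B) (dd A B \<phi>)) \<and>
    (\<forall>A B \<phi> \<phi>'. in_hmf2 p A \<and> in_hmf2 p B \<and> ismor p A B \<phi> \<and> ismor p A B \<phi>' \<and>
        htpy A B \<phi> \<phi>' \<longrightarrow> htpy A (qshift 2 B) (dd A B \<phi>) (dd A B \<phi>')) \<and>
    (\<forall>A B \<phi> \<phi>'. in_hmf2 p A \<and> in_hmf2 p B \<and> ismor p A B \<phi> \<and> ismor p A B \<phi>' \<longrightarrow>
        htpy A (qshift 2 B) (dd A B (madd \<phi> \<phi>')) (madd (dd A B \<phi>) (dd A B \<phi>'))) \<and>
    (\<forall>A B \<phi>. in_hmf2 p A \<and> in_hmf2 p B \<and> ismor p A B \<phi> \<longrightarrow>
        htpy A B (msub \<phi> (mbar \<phi>)) (mcomp (fnat B) (dd A B \<phi>)) \<and>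
        htpy (qshift 2 A) (qshift 2 B) (msub \<phi> (mbar \<phi>)) (mcomp (dd A B \<phi>) (fnat A))) \<and>
    (\<forall>A B C \<phi> \<psi>. in_hmf2 p A \<and> in_hmf2 p B \<and> in_hmf2 p C \<and>
        ismor p A B \<phi> \<and> ismor p B C \<psi> \<longrightarrow>
        htpy A (qshift 2 C) (dd A C (mcomp \<psi> \<phi>))
             (madd (mcomp (dd B C \<psi>) \<phi>) (mcomp (mbar \<psi>) (dd A B \<phi>))) \<and>
        htpy A (qshift 2 C) (dd A C (mcomp \<psi> \<phi>))
             (madd (mcomp (dd B C \<psi>) (mbar \<phi>)) (mcomp \<psi> (dd A B \<phi>))))"
proof (intro exI[of _ "\<lambda>A B \<phi>. (dmat (fst \<phi>), dmat (snd \<phi>))"] conjI allI impI)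
  note G = good_obj[OF even]
  have carr: "fst \<phi> \<in> carrier_mat (length (gens0 B)) (length (gens0 A))"
     "snd \<phi> \<in> carrier_mat (length (gens1 B)) (length (gens1 A))"
    if "ismor p A B \<phi>" for A B \<phi> using that unfolding ismor_def by blast+
  fix A B \<phi>
  assume a: "in_hmf2 p A \<and> in_hmf2 p B \<and> ismor p A B \<phi>"
  then show "ismor p A (qshift 2 B) (dmat (fst \<phi>), dmat (snd \<phi>))"
    using ismor_dd G by blast
next
  note G = good_obj[OF even]
  have carr: "fst \<phi> \<in> carrier_mat (length (gens0 B)) (length (gens0 A))"
     "snd \<phi> \<in> carrier_mat (length (gens1 B)) (length (gens1 A))"
    if "ismor p A B \<phi>" for A B \<phi> using that unfolding ismor_def by blast+
  fix A B \<phi> \<phi>'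
  assume a: "in_hmf2 p A \<and> in_hmf2 p B \<and> ismor p A B \<phi> \<and> ismor p A B \<phi>' \<and> htpy A B \<phi> \<phi>'"
  then have gA: "good A" and gB: "good B" using G by blast+
  note dA = good_dims[OF gA] and dB = good_dims[OF gB]
  from a obtain h0 h1 where
    h0: "h0 \<in> carrier_mat (length (gens1 B)) (length (gens0 A))" and
    h1: "h1 \<in> carrier_mat (length (gens0 B)) (length (gens1 A))" and
    e0: "fst \<phi> - fst \<phi>' = dif1 B * h0 + h1 * dif0 A" and
    e1: "snd \<phi> - snd \<phi>' = dif0 B * h1 + h0 * dif1 A"
    unfolding htpy_def by blast
  have c: "fst \<phi> \<in> carrier_mat (length (gens0 B)) (length (gens0 A))"
     "snd \<phi> \<in> carrier_mat (length (gens1 B)) (length (gens1 A))"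
     "fst \<phi>' \<in> carrier_mat (length (gens0 B)) (length (gens0 A))"
     "snd \<phi>' \<in> carrier_mat (length (gens1 B)) (length (gens1 A))"
    using a carr by blast+
  have "dmat (fst \<phi>) - dmat (fst \<phi>') = dmat (fst \<phi> - fst \<phi>')"
    using c by (simp add: dmat_diff carrier_matD)
  also have "\<dots> = dmat (dif1 B * h0) + dmat (h1 * dif0 A)"
    unfolding e0 using h0 h1 dA dB by (simp add: dmat_add carrier_matD)
  also have "\<dots> = dif1 B * dmat h0 + dmat h1 * dif0 A"
    using h0 h1 dA dB by (simp add: dmat_fixL dmat_fixR carrier_matD)
  finally have E0: "dmat (fst \<phi>) - dmat (fst \<phi>') = dif1 B * dmat h0 + dmat h1 * dif0 A" .
  have "dmat (snd \<phi>) - dmat (snd \<phi>') = dmat (snd \<phi> - snd \<phi>')"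
    using c by (simp add: dmat_diff carrier_matD)
  also have "\<dots> = dmat (dif0 B * h1) + dmat (h0 * dif1 A)"
    unfolding e1 using h0 h1 dA dB by (simp add: dmat_add carrier_matD)
  also have "\<dots> = dif0 B * dmat h1 + dmat h0 * dif1 A"
    using h0 h1 dA dB by (simp add: dmat_fixL dmat_fixR carrier_matD)
  finally have E1: "dmat (snd \<phi>) - dmat (snd \<phi>') = dif0 B * dmat h1 + dmat h0 * dif1 A" .
  show "htpy A (qshift 2 B) (dmat (fst \<phi>), dmat (snd \<phi>)) (dmat (fst \<phi>'), dmat (snd \<phi>'))"
    unfolding htpy_def using h0 h1 E0 E1
    by (intro exI[of _ "dmat h0"] exI[of _ "dmat h1"]) simp
next
  note G = good_obj[OF even]
  have carr: "fst \<phi> \<in> carrier_mat (length (gens0 B)) (length (gens0 A))"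
     "snd \<phi> \<in> carrier_mat (length (gens1 B)) (length (gens1 A))"
    if "ismor p A B \<phi>" for A B \<phi> using that unfolding ismor_def by blast+
  fix A B \<phi> \<phi>'
  assume a: "in_hmf2 p A \<and> in_hmf2 p B \<and> ismor p A B \<phi> \<and> ismor p A B \<phi>'"
  then have gA: "good A" and gB: "good B" using G by blast+
  have c: "fst \<phi> \<in> carrier_mat (length (gens0 B)) (length (gens0 A))"
     "snd \<phi> \<in> carrier_mat (length (gens1 B)) (length (gens1 A))"
     "fst \<phi>' \<in> carrier_mat (length (gens0 B)) (length (gens0 A))"
     "snd \<phi>' \<in> carrier_mat (length (gens1 B)) (length (gens1 A))"
    using a carr by blast+
  show "htpy A (qshift 2 B) (dmat (fst (madd \<phi> \<phi>')), dmat (snd (madd \<phi> \<phi>')))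
     (madd (dmat (fst \<phi>), dmat (snd \<phi>)) (dmat (fst \<phi>'), dmat (snd \<phi>')))"
    using gA good_q[OF gB] c
    by (intro htpy_refl) (simp_all add: madd_def dmat_add carrier_matD)
next
  note G = good_obj[OF even]
  have carr: "fst \<phi> \<in> carrier_mat (length (gens0 B)) (length (gens0 A))"
     "snd \<phi> \<in> carrier_mat (length (gens1 B)) (length (gens1 A))"
    if "ismor p A B \<phi>" for A B \<phi> using that unfolding ismor_def by blast+
  fix A B \<phi>
  assume a: "in_hmf2 p A \<and> in_hmf2 p B \<and> ismor p A B \<phi>"
  then have gA: "good A" and gB: "good B" using G by blast+
  have c: "fst \<phi> \<in> carrier_mat (length (gens0 B)) (length (gens0 A))"
     "snd \<phi> \<in> carrier_mat (length (gens1 B)) (length (gens1 A))"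
    using a carr by blast+
  have m: "mbar \<phi> = (bmat (fst \<phi>), bmat (snd \<phi>))" by (simp add: mbar_def bmat_def)
  have f: "\<And>C. fnat C = (ff \<cdot>\<^sub>m 1\<^sub>m (length (gens0 C)), ff \<cdot>\<^sub>m 1\<^sub>m (length (gens1 C)))"
    by (simp add: fnat_def ff_def)
  show "htpy A B (msub \<phi> (mbar \<phi>)) (mcomp (fnat B) (dmat (fst \<phi>), dmat (snd \<phi>)))"
    using gA gB c
    by (intro htpy_refl) (simp_all add: m f msub_def mcomp_def ff_left minus_carrier_mat)
  show "htpy (qshift 2 A) (qshift 2 B) (msub \<phi> (mbar \<phi>)) (mcomp (dmat (fst \<phi>), dmat (snd \<phi>)) (fnat A))"
    using good_q[OF gA] good_q[OF gB] c
    by (intro htpy_refl) (simp_all add: m f msub_def mcomp_def ff_right minus_carrier_mat)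
next
  note G = good_obj[OF even]
  have carr: "fst \<phi> \<in> carrier_mat (length (gens0 B)) (length (gens0 A))"
     "snd \<phi> \<in> carrier_mat (length (gens1 B)) (length (gens1 A))"
    if "ismor p A B \<phi>" for A B \<phi> using that unfolding ismor_def by blast+
  fix A B C \<phi> \<psi>
  assume a: "in_hmf2 p A \<and> in_hmf2 p B \<and> in_hmf2 p C \<and> ismor p A B \<phi> \<and> ismor p B C \<psi>"
  then have gA: "good A" and gC: "good C" using G by blast+
  have c: "fst \<phi> \<in> carrier_mat (length (gens0 B)) (length (gens0 A))"
     "snd \<phi> \<in> carrier_mat (length (gens1 B)) (length (gens1 A))"
     "fst \<psi> \<in> carrier_mat (length (gens0 C)) (length (gens0 B))"
     "snd \<psi> \<in> carrier_mat (length (gens1 C)) (length (gens1 B))"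
    using a carr by blast+
  have m: "\<And>\<chi>. mbar \<chi> = (bmat (fst \<chi>), bmat (snd \<chi>))" by (simp add: mbar_def bmat_def)
  show "htpy A (qshift 2 C) (dmat (fst (mcomp \<psi> \<phi>)), dmat (snd (mcomp \<psi> \<phi>)))
     (madd (mcomp (dmat (fst \<psi>), dmat (snd \<psi>)) \<phi>) (mcomp (mbar \<psi>) (dmat (fst \<phi>), dmat (snd \<phi>))))"
    using gA good_q[OF gC] c
    by (intro htpy_refl) (simp_all add: m madd_def mcomp_def dmat_mult1 carrier_matD)
  show "htpy A (qshift 2 C) (dmat (fst (mcomp \<psi> \<phi>)), dmat (snd (mcomp \<psi> \<phi>)))
     (madd (mcomp (dmat (fst \<psi>), dmat (snd \<psi>)) (mbar \<phi>)) (mcomp \<psi> (dmat (fst \<phi>), dmat (snd \<phi>))))"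
    using gA good_q[OF gC] c
    by (intro htpy_refl) (simp_all add: m madd_def mcomp_def dmat_mult2 carrier_matD)
qed

end
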